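(* Let $n=4h$ with $h$ odd, let $D_n=\langle x,y\mid x^n=y^2=1,\ yxy^{-1}=x^{-1}\rangle$, and let $G=D_n\rtimes\langle\beta_2\rangle$ with $\langle \beta_2\rangle\cong\mathbb Z/2$, where conjugation by $\beta_2$ acts by $y\mapsto yx^2$, $x\mapsto x^{2h-1}$; let $H=D_n\times\{0\}$ (index 2 in $G$). Then for none of the cover types I, II, III-a, III-b does there exist an admissible homomorphism $f:T(m_1,\dots,m_r)\to G$.
   Context: For integers $m_1,\dots,m_r\ge 2$, $T(m_1,\dots,m_r):=\langle\gamma_1,\dots,\gamma_r\mid \gamma_1\cdots\gamma_r=1,\ \gamma_i^{m_i}=1\rangle$. Let $f_H:=\pi_H\circ f$, where $\pi_H:G\to G/H\cong\mathbb Z/2$ is the quotient map. A homomorphism $f:T(m_1,\dots,m_r)\to G$ is admissible for a given cover type if $f$ is surjective, $f(\gamma_i)$ has order exactly $m_i$, and: Cover type I: $r=6$, $(m_i)=(2,\dots,2)$, $f_H(\gamma_i)\ne 0$ for all $i$. Cover type II: $r=5$, $(m_i)=(2,2,2,2,c_5)$, $f_H(\gamma_i)\ne0$ for $i\le4$, $f_H(\gamma_5)=0$. Cover type III-a: $r=4$, $(m_i)=(2,2,2,2d_4)$ with $d_4>1$, $f_H(\gamma_i)\ne 0$ for all $i$. Cover type III-b: $r=4$, $(m_i)=(2,2,c_3,c_4)$ with $c_3\le c_4$, $c_4>2$, $f_H(\gamma_1),f_H(\gamma_2)\ne0$, $f_H(\gamma_3)=f_H(\gamma_4)=0$. *)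

theory Defs
  imports "HOL-Algebra.Algebra"
begin

text \<open>Element ((a,s),e) represents x^a y^s beta^e, with 0 <= a < n, s,e in {0,1}.\<close>

definition dmult :: "int \<Rightarrow> int \<times> int \<Rightarrow> int \<times> int \<Rightarrow> int \<times> int" where
  "dmult n d d' = (case d of (a, s) \<Rightarrow> case d' of (b, t) \<Rightarrow>
      ((a + (if s = 0 then b else - b)) mod n, (s + t) mod 2))"

text \<open>Conjugation by beta_2: x maps to x^(2h-1), y maps to y x^2 = x^(-2) y,
  hence x^a y^s maps to x^((2h-1)a - 2s) y^s.\<close>
definition phiD :: "int \<Rightarrow> int \<times> int \<Rightarrow> int \<times> int" where
  "phiD h d = (case d of (a, s) \<Rightarrow> (((2*h - 1) * a - 2 * s) mod (4*h), s))"

definition Gmult :: "int \<Rightarrow> (int \<times> int) \<times> int \<Rightarrow> (int \<times> int) \<times> int \<Rightarrow> (int \<times> int) \<times> int" where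
  "Gmult h g g' = (case g of (d, e) \<Rightarrow> case g' of (d', e') \<Rightarrow>
      (dmult (4*h) d (if e = 0 then d' else phiD h d'), (e + e') mod 2))"

definition Ggrp :: "int \<Rightarrow> ((int \<times> int) \<times> int) monoid" where
  "Ggrp h = \<lparr> carrier = {g. 0 \<le> fst (fst g) \<and> fst (fst g) < 4*h \<and>
                 snd (fst g) \<in> {0,1} \<and> snd g \<in> {0,1}},
              monoid.mult = Gmult h, one = ((0, 0), 0) \<rparr>"

definition Hsub :: "int \<Rightarrow> ((int \<times> int) \<times> int) set" where
  "Hsub h = {g \<in> carrier (Ggrp h). snd g = 0}"

text \<open>By the presentation of T(m_1,...,m_r), a homomorphism f : T -> G is the same as the
  tuple gs = (f(gamma_1),...,f(gamma_r)) of elements satisfying the relations.\<close>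
definition T_hom :: "('a, 'b) monoid_scheme \<Rightarrow> nat list \<Rightarrow> 'a list \<Rightarrow> bool" where
  "T_hom G ms gs \<longleftrightarrow> length gs = length ms \<and> (\<forall>m \<in> set ms. m \<ge> 2) \<and>
     set gs \<subseteq> carrier G \<and> foldr (\<otimes>\<^bsub>G\<^esub>) gs \<one>\<^bsub>G\<^esub> = \<one>\<^bsub>G\<^esub> \<and>
     (\<forall>i < length ms. (gs ! i) [^]\<^bsub>G\<^esub> (ms ! i) = \<one>\<^bsub>G\<^esub>)"

definition admissible_hom :: "('a, 'b) monoid_scheme \<Rightarrow> nat list \<Rightarrow> 'a list \<Rightarrow> bool" where
  "admissible_hom G ms gs \<longleftrightarrow> T_hom G ms gs \<and> generate G (set gs) = carrier G \<and>
     (\<forall>i < length ms. group.ord G (gs ! i) = ms ! i)"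

text \<open>f_H(gamma_i) \<noteq> 0 iff f(gamma_i) \<notin> H.\<close>
definition cover_I :: "('a, 'b) monoid_scheme \<Rightarrow> 'a set \<Rightarrow> 'a list \<Rightarrow> bool" where
  "cover_I G H gs \<longleftrightarrow> admissible_hom G (replicate 6 2) gs \<and> (\<forall>i < 6. gs ! i \<notin> H)"

definition cover_II :: "('a, 'b) monoid_scheme \<Rightarrow> 'a set \<Rightarrow> 'a list \<Rightarrow> bool" where
  "cover_II G H gs \<longleftrightarrow> (\<exists>c5. admissible_hom G [2,2,2,2,c5] gs \<and>
     (\<forall>i < 4. gs ! i \<notin> H) \<and> gs ! 4 \<in> H)"

definition cover_IIIa :: "('a, 'b) monoid_scheme \<Rightarrow> 'a set \<Rightarrow> 'a list \<Rightarrow> bool" where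
  "cover_IIIa G H gs \<longleftrightarrow> (\<exists>d4 > 1. admissible_hom G [2,2,2,2*d4] gs \<and>
     (\<forall>i < 4. gs ! i \<notin> H))"

definition cover_IIIb :: "('a, 'b) monoid_scheme \<Rightarrow> 'a set \<Rightarrow> 'a list \<Rightarrow> bool" where
  "cover_IIIb G H gs \<longleftrightarrow> (\<exists>c3 c4. c3 \<le> c4 \<and> c4 > 2 \<and> admissible_hom G [2,2,c3,c4] gs \<and>
     gs ! 0 \<notin> H \<and> gs ! 1 \<notin> H \<and> gs ! 2 \<in> H \<and> gs ! 3 \<in> H)"

end

theory Submission
  imports Defs
begin


lemma L1: "((c::int) * (u mod n) + d) mod n = (c*u + d) mod n"
  by (metis mod_add_left_eq mod_mult_right_eq)
lemma L2: "((c::int) * (u mod n) - d) mod n = (c*u - d) mod n"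
  by (metis mod_diff_left_eq mod_mult_right_eq)
lemma modeq: "(x::int) = y \<Longrightarrow> x mod n = y mod n" by simp

lemma dmult_assoc:
  assumes "s1 \<in> {0,1}" "s2 \<in> {0,1}"
  shows "dmult n (dmult n (a1,s1) (a2,s2)) (a3,s3) = dmult n (a1,s1) (dmult n (a2,s2) (a3,s3))"
  using assms by (auto simp: dmult_def mod_simps algebra_simps)

lemma phiD_hom:
  assumes "s1 \<in> {0,1}" "s2 \<in> {0,1}"
  shows "phiD h (dmult (4*h) (a1,s1) (a2,s2)) = dmult (4*h) (phiD h (a1,s1)) (phiD h (a2,s2))"
  using assms by (auto simp: dmult_def phiD_def mod_simps L1 L2 intro!: modeq; simp add: algebra_simps)

lemma phiD_invol:
  assumes "s \<in> {0,1}" "0 \<le> a" "a < 4*h"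
  shows "phiD h (phiD h (a,s)) = (a,s)"
proof -
  have e: "(2*h-1)*((2*h-1)*a-2*s) - 2*s = a + ((h-1)*a - s) * (4*h)" by (simp add: algebra_simps)
  have "((2*h-1)*(((2*h-1)*a-2*s) mod (4*h)) - 2*s) mod (4*h) = a"
    by (simp add: L2 e assms)
  thus ?thesis using assms by (auto simp add: phiD_def)
qed

definition canD :: "int \<Rightarrow> int \<times> int \<Rightarrow> bool" where
  "canD h d \<longleftrightarrow> 0 \<le> fst d \<and> fst d < 4*h \<and> snd d \<in> {0,1}"

lemma carrier_iff: "g \<in> carrier (Ggrp h) \<longleftrightarrow> canD h (fst g) \<and> snd g \<in> {0,1}"
  by (auto simp: Ggrp_def canD_def)

lemma dmult_assoc': "snd d1 \<in> {0,1} \<Longrightarrow> snd d2 \<in> {0,1} \<Longrightarrow>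
   dmult n (dmult n d1 d2) d3 = dmult n d1 (dmult n d2 d3)"
  using dmult_assoc[of "snd d1" "snd d2" n "fst d1" "fst d2" "fst d3" "snd d3"] by simp

lemma phiD_hom': "snd d1 \<in> {0,1} \<Longrightarrow> snd d2 \<in> {0,1} \<Longrightarrow>
   phiD h (dmult (4*h) d1 d2) = dmult (4*h) (phiD h d1) (phiD h d2)"
  using phiD_hom[of "snd d1" "snd d2" h "fst d1" "fst d2"] by simp

lemma phiD_invol': "canD h d \<Longrightarrow> phiD h (phiD h d) = d"
  using phiD_invol[of "snd d" "fst d" h] by (simp add: canD_def)

lemma snd_phiD[simp]: "snd (phiD h d) = snd d"
  by (simp add: phiD_def split: prod.splits)

lemma snd_dmult: "snd (dmult n d1 d2) \<in> {0,1}"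
  by (auto simp: dmult_def split: prod.splits)

lemma canD_dmult: "n = 4*h \<Longrightarrow> h > 0 \<Longrightarrow> canD h (dmult n d1 d2)"
  by (auto simp: dmult_def canD_def split: prod.splits)

lemma canD_phiD: "h > 0 \<Longrightarrow> snd d \<in> {0,1} \<Longrightarrow> canD h (phiD h d)"
  by (auto simp: phiD_def canD_def split: prod.splits)

lemma Ggrp_mult: "(x \<otimes>\<^bsub>Ggrp h\<^esub> y) = Gmult h x y"
  by (simp add: Ggrp_def)

lemma Gmult_eq: "Gmult h (d1,e1) (d2,e2) = (dmult (4*h) d1 (if e1 = 0 then d2 else phiD h d2), (e1+e2) mod 2)"
  by (simp add: Gmult_def)

lemma group_G:
  assumes hp: "h > 0"
  shows "group (Ggrp h)"
proof (rule groupI)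
  fix x y assume "x \<in> carrier (Ggrp h)" "y \<in> carrier (Ggrp h)"
  thus "x \<otimes>\<^bsub>Ggrp h\<^esub> y \<in> carrier (Ggrp h)"
    using hp by (cases x; cases y) (auto simp: carrier_iff Ggrp_mult Gmult_eq intro!: canD_dmult)
next
  show "\<one>\<^bsub>Ggrp h\<^esub> \<in> carrier (Ggrp h)" using hp by (simp add: Ggrp_def)
next
  fix x y z assume xyz: "x \<in> carrier (Ggrp h)" "y \<in> carrier (Ggrp h)" "z \<in> carrier (Ggrp h)"
  obtain d1 e1 where x: "x = (d1,e1)" by (cases x)
  obtain d2 e2 where y: "y = (d2,e2)" by (cases y)
  obtain d3 e3 where z: "z = (d3,e3)" by (cases z)
  have c: "canD h d1" "canD h d2" "canD h d3" "e1 \<in> {0,1}" "e2 \<in> {0,1}" "e3 \<in> {0,1}"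
    using xyz x y z by (auto simp: carrier_iff)
  hence s: "snd d1 \<in> {0,1}" "snd d2 \<in> {0,1}" "snd d3 \<in> {0,1}" by (auto simp: canD_def)
  show "x \<otimes>\<^bsub>Ggrp h\<^esub> y \<otimes>\<^bsub>Ggrp h\<^esub> z = x \<otimes>\<^bsub>Ggrp h\<^esub> (y \<otimes>\<^bsub>Ggrp h\<^esub> z)"
    using c s unfolding x y z Ggrp_mult
    by (auto simp: Gmult_eq dmult_assoc' phiD_hom' phiD_invol' snd_dmult mod_simps)
next
  fix x assume "x \<in> carrier (Ggrp h)"
  thus "\<one>\<^bsub>Ggrp h\<^esub> \<otimes>\<^bsub>Ggrp h\<^esub> x = x"
    by (cases x) (auto simp: carrier_iff Ggrp_mult Gmult_eq canD_def dmult_def Ggrp_def)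
next
  fix x assume xc: "x \<in> carrier (Ggrp h)"
  obtain d e where x: "x = (d,e)" by (cases x)
  define c where "c = (if e = 0 then d else phiD h d)"
  have cd: "canD h d" "e \<in> {0,1}" using xc by (auto simp: x carrier_iff)
  have cc: "canD h c"
    using cd canD_phiD[OF hp, of d] unfolding c_def by (auto simp: canD_def)
  obtain a t where ct: "c = (a,t)" by (cases c)
  define y where "y = ((if t = 0 then (- a) mod (4*h) else a, t), e)"
  have "y \<in> carrier (Ggrp h)" using cc xc hp by (auto simp: y_def ct carrier_iff canD_def x)
  moreover have "y \<otimes>\<^bsub>Ggrp h\<^esub> x = \<one>\<^bsub>Ggrp h\<^esub>"
    using cc xc by (auto simp: y_def x Ggrp_mult Gmult_eq ct[unfolded c_def] dmult_def Ggrp_def canD_def carrier_iff mod_simps)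
  ultimately show "\<exists>y\<in>carrier (Ggrp h). y \<otimes>\<^bsub>Ggrp h\<^esub> x = \<one>\<^bsub>Ggrp h\<^esub>" by blast
qed

definition chi :: "int \<Rightarrow> int \<Rightarrow> (int \<times> int) \<times> int \<Rightarrow> bool" where
  "chi u v g \<longleftrightarrow> even (u * fst (fst g) + v * snd (fst g))"

lemma even_mod4h: "even ((x::int) mod (4*h)) \<longleftrightarrow> even x"
proof -
  have "x mod (4*h) = x - (2*h*(x div (4*h)))*2" by (simp add: minus_div_mult_eq_mod[symmetric] algebra_simps)
  thus ?thesis by simp
qed

lemma parity_lin: "even (A::int) = (even a = even b) \<Longrightarrow> even (S::int) = (even s = even t) \<Longrightarrow>
   even (u*A+v*S) = (even (u*a+v*s) = even (u*b+v*t))"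
  by (simp add: even_mult_iff) blast

lemma chi_mult:
  assumes "g \<in> carrier (Ggrp h)" "g' \<in> carrier (Ggrp h)"
  shows "chi u v (g \<otimes>\<^bsub>Ggrp h\<^esub> g') \<longleftrightarrow> (chi u v g \<longleftrightarrow> chi u v g')"
proof -
  obtain a s e where g: "g = ((a,s),e)" by (metis prod.collapse)
  obtain b t f where g': "g' = ((b,t),f)" by (metis prod.collapse)
  have st: "s \<in> {0,1}" "t \<in> {0,1}" using assms g g' by (auto simp: Ggrp_def)
  define b' where "b' = (if e = 0 then b else ((2*h-1)*b - 2*t) mod (4*h))"
  have eb: "even b' \<longleftrightarrow> even b" by (auto simp: b'_def even_mod4h)
  have p: "g \<otimes>\<^bsub>Ggrp h\<^esub> g' = (((a + (if s = 0 then b' else - b')) mod (4*h), (s+t) mod 2), (e+f) mod 2)"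
    by (auto simp: g g' Ggrp_mult Gmult_eq dmult_def phiD_def b'_def)
  have q: "even ((a + (if s = 0 then b' else - b')) mod (4*h)) \<longleftrightarrow> (even a \<longleftrightarrow> even b)"
    using eb by (simp add: even_mod4h)
  have r: "even ((s+t) mod 2) \<longleftrightarrow> (even s \<longleftrightarrow> even t)" by simp
  show ?thesis unfolding chi_def p fst_conv snd_conv
    unfolding g g' fst_conv snd_conv by (rule parity_lin[OF q r])
qed

lemma one_G: "\<one>\<^bsub>Ggrp h\<^esub> = ((0,0),0)" by (simp add: Ggrp_def)

lemma chi_foldr:
  assumes hp: "h > 0"
  shows "set gs \<subseteq> carrier (Ggrp h) \<Longrightarrow> foldr (\<otimes>\<^bsub>Ggrp h\<^esub>) gs \<one>\<^bsub>Ggrp h\<^esub> \<in> carrier (Ggrp h) \<and>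
     (chi u v (foldr (\<otimes>\<^bsub>Ggrp h\<^esub>) gs \<one>\<^bsub>Ggrp h\<^esub>) \<longleftrightarrow> even (length (filter (\<lambda>g. \<not> chi u v g) gs)))"
proof (induction gs)
  case Nil
  then show ?case using group.is_monoid[OF group_G[OF hp]] by (simp add: one_G chi_def monoid.one_closed[of "Ggrp h", unfolded one_G])
next
  case (Cons g gs)
  then have gc: "g \<in> carrier (Ggrp h)" and IH: "foldr (\<otimes>\<^bsub>Ggrp h\<^esub>) gs \<one>\<^bsub>Ggrp h\<^esub> \<in> carrier (Ggrp h) \<and>
     (chi u v (foldr (\<otimes>\<^bsub>Ggrp h\<^esub>) gs \<one>\<^bsub>Ggrp h\<^esub>) \<longleftrightarrow> even (length (filter (\<lambda>g. \<not> chi u v g) gs)))" by auto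
  show ?case using IH gc chi_mult[OF gc, of "foldr (\<otimes>\<^bsub>Ggrp h\<^esub>) gs \<one>\<^bsub>Ggrp h\<^esub>" u v]
    monoid.m_closed[OF group.is_monoid[OF group_G[OF hp]] gc, of "foldr (\<otimes>\<^bsub>Ggrp h\<^esub>) gs \<one>\<^bsub>Ggrp h\<^esub>"]
    by auto
qed

lemma last_chi:
  assumes "even (length (filter (\<lambda>g. \<not> P g) xs))" "\<forall>i<length xs. i \<noteq> j \<longrightarrow> P (xs!i)" "j < length xs"
  shows "P (xs!j)"
proof (rule ccontr)
  assume np: "\<not> P (xs!j)"
  have "{i. i < length xs \<and> \<not> P (xs!i)} = {j}" using assms(2,3) np by auto
  hence "length (filter (\<lambda>g. \<not> P g) xs) = 1" by (simp add: length_filter_conv_card)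
  thus False using assms(1) by simp
qed


lemma no_gen:
  assumes hp: "h > 0" and sub: "S \<subseteq> carrier (Ggrp h)" and ch: "\<forall>g\<in>S. chi u v g" and uv: "odd u \<or> odd v"
  shows "generate (Ggrp h) S \<noteq> carrier (Ggrp h)"
proof -
  interpret G: group "Ggrp h" by (rule group_G[OF hp])
  define K where "K = {g \<in> carrier (Ggrp h). chi u v g}"
  have sg: "subgroup K (Ggrp h)"
  proof (rule G.subgroupI)
    show "K \<subseteq> carrier (Ggrp h)" unfolding K_def by blast
    have "\<one>\<^bsub>Ggrp h\<^esub> \<in> K" unfolding K_def one_G chi_def using G.one_closed unfolding one_G by simp
    thus "K \<noteq> {}" by blast
  next
    fix a assume a: "a \<in> K"
    hence ac: "a \<in> carrier (Ggrp h)" and ca: "chi u v a" unfolding K_def by auto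
    have "chi u v (a \<otimes>\<^bsub>Ggrp h\<^esub> inv\<^bsub>Ggrp h\<^esub> a)" unfolding G.r_inv[OF ac] one_G chi_def by simp
    hence "chi u v (inv\<^bsub>Ggrp h\<^esub> a)" using chi_mult[OF ac G.inv_closed[OF ac], of u v] ca by simp
    thus "inv\<^bsub>Ggrp h\<^esub> a \<in> K" using G.inv_closed[OF ac] unfolding K_def by blast
  next
    fix a b assume "a \<in> K" "b \<in> K"
    thus "a \<otimes>\<^bsub>Ggrp h\<^esub> b \<in> K" using chi_mult[of a h b u v] G.m_closed unfolding K_def by blast
  qed
  have "S \<subseteq> K" using sub ch unfolding K_def by blast
  hence gK: "generate (Ggrp h) S \<subseteq> K" by (rule G.generate_subgroup_incl[OF _ sg])
  define w where "w = (if odd u then ((1::int,0::int),0::int) else ((0,1),0))"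
  have "w \<in> carrier (Ggrp h)" using hp unfolding w_def Ggrp_def by auto
  moreover have "w \<notin> K" using uv unfolding w_def K_def chi_def by auto
  ultimately show ?thesis using gK by blast
qed
lemma invol:
  assumes hp: "h > 0" and ho: "odd h" and gc: "g \<in> carrier (Ggrp h)" and gH: "g \<notin> Hsub h"
    and g2: "g [^]\<^bsub>Ggrp h\<^esub> (2::nat) = \<one>\<^bsub>Ggrp h\<^esub>"
  shows "snd (fst g) = 0 \<and> even (fst (fst g))"
proof -
  interpret G: group "Ggrp h" by (rule group_G[OF hp])
  obtain a s e where g: "g = ((a,s),e)" by (metis prod.collapse)
  have e1: "e = 1" and s01: "s \<in> {0,1}" using gc gH by (auto simp: g Hsub_def Ggrp_def)
  have "g \<otimes>\<^bsub>Ggrp h\<^esub> g = \<one>\<^bsub>Ggrp h\<^esub>" using g2 gc by (simp add: numeral_2_eq_2)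
  hence eq: "Gmult h g g = ((0,0),0)" by (simp add: Ggrp_mult one_G)
  show ?thesis
  proof (cases "s = 0")
    case True
    have "(a + ((2*h-1)*a) mod (4*h)) mod (4*h) = 0"
      using eq by (simp add: g e1 True Gmult_eq dmult_def phiD_def)
    hence "(a + (2*h-1)*a) mod (4*h) = 0" by (simp add: mod_add_right_eq)
    moreover have "a + (2*h-1)*a = 2*h*a" by (simp add: algebra_simps)
    ultimately have z: "(2*h*a) mod (4*h) = 0" by simp
    have "even a"
    proof (rule ccontr)
      assume "odd a" then obtain k where k: "a = 2*k+1" by (metis oddE)
      have "2*h*a = 2*h + k*(4*h)" by (simp add: k algebra_simps)
      hence "(2*h*a) mod (4*h) = (2*h) mod (4*h)" by (simp only: mod_mult_self1)
      also have "\<dots> = 2*h" using hp by (intro mod_pos_pos_trivial) auto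
      finally have "(2*h*a) mod (4*h) = 2*h" .
      thus False using z hp by simp
    qed
    thus ?thesis by (simp add: g True)
  next
    case False
    hence s1: "s = 1" using s01 by auto
    have "(a - ((2*h-1)*a - 2) mod (4*h)) mod (4*h) = 0"
      using eq by (simp add: g e1 s1 Gmult_eq dmult_def phiD_def)
    hence "(a - ((2*h-1)*a - 2)) mod (4*h) = 0" by (simp add: mod_diff_right_eq)
    hence d: "4*h dvd (a - ((2*h-1)*a - 2))" by (simp add: dvd_eq_mod_eq_0)
    obtain j where j: "h = 2*j+1" using ho by (metis oddE)
    have "a - ((2*h-1)*a - 2) = 2 - 4*(j*a)" by (simp add: j algebra_simps)
    hence "4 dvd (2 - 4*(j*a))" using d by (metis dvd_mult_left)
    hence "(4::int) dvd (2 - 4*(j*a)) + 4*(j*a)" by (rule dvd_add) simp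
    hence "(4::int) dvd 2" by (simp only: diff_add_cancel)
    thus ?thesis by simp
  qed
qed

lemma prod_even:
  assumes hp: "h > 0" and T: "T_hom (Ggrp h) ms gs"
  shows "even (length (filter (\<lambda>g. \<not> chi u v g) gs))"
proof -
  have sub: "set gs \<subseteq> carrier (Ggrp h)" and pr: "foldr (\<otimes>\<^bsub>Ggrp h\<^esub>) gs \<one>\<^bsub>Ggrp h\<^esub> = \<one>\<^bsub>Ggrp h\<^esub>"
    using T by (auto simp: T_hom_def)
  have "chi u v (\<one>\<^bsub>Ggrp h\<^esub>)" by (simp add: one_G chi_def)
  thus ?thesis using chi_foldr[OF hp sub, of u v] pr by simp
qed

lemma notH_chi:
  assumes hp: "h > 0" and ho: "odd h" and gc: "g \<in> carrier (Ggrp h)" and gH: "g \<notin> Hsub h"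
    and g2: "g [^]\<^bsub>Ggrp h\<^esub> (2::nat) = \<one>\<^bsub>Ggrp h\<^esub>"
  shows "chi 1 v g"
  using invol[OF assms] by (simp add: chi_def)

lemma notH_chi01:
  assumes hp: "h > 0" and ho: "odd h" and gc: "g \<in> carrier (Ggrp h)" and gH: "g \<notin> Hsub h"
    and g2: "g [^]\<^bsub>Ggrp h\<^esub> (2::nat) = \<one>\<^bsub>Ggrp h\<^esub>"
  shows "chi 0 1 g"
  using invol[OF assms] by (simp add: chi_def)

theorem lemma5p8:
  fixes h :: int
  assumes "h > 0" and "odd h"
  shows "\<not> (\<exists>gs. cover_I (Ggrp h) (Hsub h) gs \<or> cover_II (Ggrp h) (Hsub h) gs \<or>
                 cover_IIIa (Ggrp h) (Hsub h) gs \<or> cover_IIIb (Ggrp h) (Hsub h) gs)"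
proof
  assume "\<exists>gs. cover_I (Ggrp h) (Hsub h) gs \<or> cover_II (Ggrp h) (Hsub h) gs \<or>
                 cover_IIIa (Ggrp h) (Hsub h) gs \<or> cover_IIIb (Ggrp h) (Hsub h) gs"
  then obtain gs where c: "cover_I (Ggrp h) (Hsub h) gs \<or> cover_II (Ggrp h) (Hsub h) gs \<or>
                 cover_IIIa (Ggrp h) (Hsub h) gs \<or> cover_IIIb (Ggrp h) (Hsub h) gs" by blast
  note hp = assms(1) and ho = assms(2)
  have main: "False" if T: "T_hom (Ggrp h) ms gs" and gen: "generate (Ggrp h) (set gs) = carrier (Ggrp h)"
     and uv: "odd u \<or> odd v" and j: "j < length gs"
     and others: "\<forall>i<length gs. i \<noteq> j \<longrightarrow> chi u v (gs!i)" for ms u v j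
  proof -
    have ev: "even (length (filter (\<lambda>g. \<not> chi u v g) gs))" by (rule prod_even[OF hp T])
    have "chi u v (gs!j)" by (rule last_chi[OF ev others j])
    hence all: "\<forall>i<length gs. chi u v (gs!i)" using others by blast
    have "\<forall>g\<in>set gs. chi u v g" using all by (metis in_set_conv_nth)
    moreover have "set gs \<subseteq> carrier (Ggrp h)" using T by (simp add: T_hom_def)
    ultimately show False using no_gen[OF hp _ _ uv] gen by blast
  qed
  have carr: "gs!i \<in> carrier (Ggrp h)" if "T_hom (Ggrp h) ms gs" "i < length gs" for ms i
    using that by (auto simp: T_hom_def)
  have pw: "gs!i [^]\<^bsub>Ggrp h\<^esub> (ms!i) = \<one>\<^bsub>Ggrp h\<^esub>" if "T_hom (Ggrp h) ms gs" "i < length gs" for ms i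
    using that by (auto simp: T_hom_def)
  have len: "length gs = length ms" if "T_hom (Ggrp h) ms gs" for ms
    using that by (auto simp: T_hom_def)
  from c show False
  proof (elim disjE)
    assume "cover_I (Ggrp h) (Hsub h) gs"
    hence T: "T_hom (Ggrp h) (replicate 6 2) gs" and gen: "generate (Ggrp h) (set gs) = carrier (Ggrp h)"
      and nH: "\<forall>i<6. gs!i \<notin> Hsub h" by (auto simp: cover_I_def admissible_hom_def)
    have l: "length gs = 6" using len[OF T] by simp
    show False
    proof (rule main[OF T gen, of 1 0 0])
      show "\<forall>i<length gs. i \<noteq> 0 \<longrightarrow> chi 1 0 (gs!i)"
        using notH_chi[OF hp ho carr[OF T] _ ] pw[OF T] nH l by auto
    qed (use l in auto)
  next
    assume "cover_II (Ggrp h) (Hsub h) gs"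
    then obtain c5 where T: "T_hom (Ggrp h) [2,2,2,2,c5] gs" and gen: "generate (Ggrp h) (set gs) = carrier (Ggrp h)"
      and nH: "\<forall>i<4. gs!i \<notin> Hsub h" by (auto simp: cover_II_def admissible_hom_def)
    have l: "length gs = 5" using len[OF T] by simp
    show False
    proof (rule main[OF T gen, of 1 0 4])
      show "\<forall>i<length gs. i \<noteq> 4 \<longrightarrow> chi 1 0 (gs!i)"
      proof (intro allI impI)
        fix i assume i: "i < length gs" "i \<noteq> 4"
        hence i4: "i < 4" using l by auto
        have "[2,2,2,2,c5] ! i = (2::nat)" using i4 by (auto simp: less_Suc_eq numeral_eq_Suc)
        thus "chi 1 0 (gs!i)" using notH_chi[OF hp ho carr[OF T i(1)]] pw[OF T i(1)] nH i4 by auto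
      qed
    qed (use l in auto)
  next
    assume "cover_IIIa (Ggrp h) (Hsub h) gs"
    then obtain d4 where T: "T_hom (Ggrp h) [2,2,2,2*d4] gs" and gen: "generate (Ggrp h) (set gs) = carrier (Ggrp h)"
      and nH: "\<forall>i<4. gs!i \<notin> Hsub h" by (auto simp: cover_IIIa_def admissible_hom_def)
    have l: "length gs = 4" using len[OF T] by simp
    show False
    proof (rule main[OF T gen, of 1 0 3])
      show "\<forall>i<length gs. i \<noteq> 3 \<longrightarrow> chi 1 0 (gs!i)"
      proof (intro allI impI)
        fix i assume i: "i < length gs" "i \<noteq> 3"
        hence i3: "i < 3" using l by auto
        have "[2,2,2,2*d4] ! i = (2::nat)" using i3 by (auto simp: less_Suc_eq numeral_eq_Suc)
        thus "chi 1 0 (gs!i)" using notH_chi[OF hp ho carr[OF T i(1)]] pw[OF T i(1)] nH i3 by auto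
      qed
    qed (use l in auto)
  next
    assume "cover_IIIb (Ggrp h) (Hsub h) gs"
    then obtain c3 c4 where T: "T_hom (Ggrp h) [2,2,c3,c4] gs" and gen: "generate (Ggrp h) (set gs) = carrier (Ggrp h)"
      and n0: "gs!0 \<notin> Hsub h" and n1: "gs!1 \<notin> Hsub h" and i2: "gs!2 \<in> Hsub h"
      by (auto simp: cover_IIIb_def admissible_hom_def)
    have l: "length gs = 4" using len[OF T] by simp
    have c0: "gs!0 \<in> carrier (Ggrp h)" "gs!1 \<in> carrier (Ggrp h)" "gs!2 \<in> carrier (Ggrp h)"
      using carr[OF T] l by auto
    have p0: "gs!0 [^]\<^bsub>Ggrp h\<^esub> (2::nat) = \<one>\<^bsub>Ggrp h\<^esub>" "gs!1 [^]\<^bsub>Ggrp h\<^esub> (2::nat) = \<one>\<^bsub>Ggrp h\<^esub>"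
      using pw[OF T, of 0] pw[OF T, of 1] l by auto
    have s2: "snd (fst (gs!2)) \<in> {0,1}" using c0(3) by (auto simp: Ggrp_def)
    have lt: "(\<forall>i<length gs. i \<noteq> 3 \<longrightarrow> P (gs!i)) \<longleftrightarrow> P (gs!0) \<and> P (gs!1) \<and> P (gs!2)" for P
      using l by (auto simp: less_Suc_eq numeral_eq_Suc)
    show False
    proof (cases "snd (fst (gs!2)) = 0")
      case True
      show False
      proof (rule main[OF T gen, of 0 1 3])
        show "\<forall>i<length gs. i \<noteq> 3 \<longrightarrow> chi 0 1 (gs!i)"
          unfolding lt using notH_chi01[OF hp ho c0(1) n0 p0(1)] notH_chi01[OF hp ho c0(2) n1 p0(2)] True
          by (simp add: chi_def)
      qed (use l in auto)
    next
      case False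
      hence s1: "snd (fst (gs!2)) = 1" using s2 by auto
      define v where "v = fst (fst (gs!2)) mod 2"
      have "even (fst (fst (gs!2)) + v)" unfolding v_def by presburger
      hence c2: "chi 1 v (gs!2)" using s1 by (simp add: chi_def)
      show False
      proof (rule main[OF T gen, of 1 v 3])
        show "\<forall>i<length gs. i \<noteq> 3 \<longrightarrow> chi 1 v (gs!i)"
          unfolding lt using notH_chi[OF hp ho c0(1) n0 p0(1)] notH_chi[OF hp ho c0(2) n1 p0(2)] c2
          by simp
      qed (use l in auto)
    qed
  qed
qed
end
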